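(* Let $c\in(0,1)$ and let $(G,\phi)=(V,\vec E,\phi)$ be an infinite rooted directed random graph with in-degrees $(d_j^-)$ and out-degrees $(d_j^+)$ which arises as the local weak limit of a sequence $(G_n)$ of directed graphs, and let $R_\phi$ denote the limiting (in distribution) root-PageRank. For $\alpha>0$ let $d_\phi^{(-,\ge\alpha)}=\#\{j: j\to\phi,\ d_j^+\ge\alpha\}$. Assume there are $\alpha>0$ and $\varepsilon>0$ such that, as $k\to\infty$, $$\mathbb{P}\big(d_\phi^->k,\ d_\phi^{(-,\ge\alpha)}\ge(1-\varepsilon)d_\phi^-\big)=o\big(\mathbb{P}(d_\phi^->k)\big).$$ Then $$\mathbb{P}(R_\phi>k)\ge(1+o(1))\,\mathbb{P}\Big(d_\phi^->\frac{\alpha k}{\varepsilon c(1-c)}\Big)\qquad\text{as }k\to\infty.$$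
   Context: For a finite directed graph $G_n$ with out-degrees $d_i^+\ge1$, $p_{ij}=a_{ij}/d_i^+$ ($a_{ij}=1$ iff there is an edge $i\to j$) and PageRank $\boldsymbol{R}$ solves $\boldsymbol{R}=c\boldsymbol{R}\boldsymbol{P}+(1-c)\boldsymbol{1}$. Local weak convergence for directed graphs is taken in the sense where one considers the in-components of a uniformly chosen root and keeps out-degrees of vertices as marks; the limiting root-PageRank $R_\phi$ is the distributional limit of $R^{(G_n)}_{\phi_n}$ for uniform $\phi_n$, and equals $(1-c)\sum_{s\ge0}c^s\sum_{j}(\boldsymbol{P}^s)_{j\phi}$ with $p_{ij}=a_{ij}/d_i^+$ computed on $(G,\phi)$. $j\to\phi$ means there is a directed edge from $j$ to $\phi$. *)

theory Defs
  imports "HOL-Probability.Probability" "HOL-Library.Landau_Symbols"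
begin

text \<open>Marked graphs carry an out-degree mark D j (in the limit object the out-degree
  is a mark, not computed from the edges of the in-component).\<close>

definition outdeg :: "(nat \<Rightarrow> nat \<Rightarrow> bool) \<Rightarrow> nat \<Rightarrow> nat" where
  "outdeg E i = card {j. E i j}"

definition indeg :: "(nat \<Rightarrow> nat \<Rightarrow> bool) \<Rightarrow> nat \<Rightarrow> nat" where
  "indeg E j = card {i. E i j}"

definition indeg_ge :: "(nat \<Rightarrow> nat \<Rightarrow> bool) \<Rightarrow> (nat \<Rightarrow> nat) \<Rightarrow> real \<Rightarrow> nat \<Rightarrow> nat" where
  "indeg_ge E D \<alpha> v = card {j. E j v \<and> real (D j) \<ge> \<alpha>}"

fun walkers :: "(nat \<Rightarrow> nat \<Rightarrow> bool) \<Rightarrow> nat \<Rightarrow> nat \<Rightarrow> nat set" where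
  "walkers E v 0 = {v}"
| "walkers E v (Suc s) = {j. \<exists>k\<in>walkers E v s. E j k}"

text \<open>pw E D v s j = (P^s)_{j v} with p_{jk} = a_{jk} / D j\<close>
fun pw :: "(nat \<Rightarrow> nat \<Rightarrow> bool) \<Rightarrow> (nat \<Rightarrow> nat) \<Rightarrow> nat \<Rightarrow> nat \<Rightarrow> nat \<Rightarrow> real" where
  "pw E D v 0 j = (if j = v then 1 else 0)"
| "pw E D v (Suc s) j = (\<Sum>k\<in>{k\<in>walkers E v s. E j k}. pw E D v s k) / real (D j)"

definition root_pagerank :: "real \<Rightarrow> (nat \<Rightarrow> nat \<Rightarrow> bool) \<Rightarrow> (nat \<Rightarrow> nat) \<Rightarrow> nat \<Rightarrow> ennreal" where
  "root_pagerank c E D v =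
     ennreal (1 - c) * (\<Sum>s. ennreal (c ^ s * (\<Sum>j\<in>walkers E v s. pw E D v s j)))"

definition in_ball :: "(nat \<Rightarrow> nat \<Rightarrow> bool) \<Rightarrow> nat \<Rightarrow> nat \<Rightarrow> nat set" where
  "in_ball E v r = (\<Union>s\<le>r. walkers E v s)"

definition ball_iso :: "(nat \<Rightarrow> nat \<Rightarrow> bool) \<Rightarrow> (nat \<Rightarrow> nat) \<Rightarrow> nat \<Rightarrow>
    (nat \<Rightarrow> nat \<Rightarrow> bool) \<Rightarrow> (nat \<Rightarrow> nat) \<Rightarrow> nat \<Rightarrow> nat \<Rightarrow> bool" where
  "ball_iso E D v E' D' v' r \<longleftrightarrow>
     (\<exists>f. bij_betw f (in_ball E v r) (in_ball E' v' r) \<and> f v = v' \<and>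
          (\<forall>u\<in>in_ball E v r. D' (f u) = D u) \<and>
          (\<forall>u\<in>in_ball E v r. \<forall>w\<in>in_ball E v r. E u w \<longleftrightarrow> E' (f u) (f w)))"

definition local_weak_limit ::
  "'w measure \<Rightarrow> ('w \<Rightarrow> nat \<Rightarrow> nat \<Rightarrow> bool) \<Rightarrow> ('w \<Rightarrow> nat \<Rightarrow> nat) \<Rightarrow> ('w \<Rightarrow> nat) \<Rightarrow>
   (nat \<Rightarrow> nat) \<Rightarrow> (nat \<Rightarrow> nat \<Rightarrow> nat \<Rightarrow> bool) \<Rightarrow> bool" where
  "local_weak_limit M E D \<phi> N A \<longleftrightarrow>
     (\<forall>n. N n \<ge> 1 \<and> (\<forall>i j. A n i j \<longrightarrow> i < N n \<and> j < N n) \<and>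
          (\<forall>i<N n. outdeg (A n) i \<ge> 1)) \<and>
     (\<forall>r E' D' v'. finite (in_ball E' v' r) \<longrightarrow>
        (\<lambda>n. real (card {v\<in>{..<N n}. ball_iso (A n) (outdeg (A n)) v E' D' v' r}) / real (N n))
          \<longlonglongrightarrow> measure M {\<omega>\<in>space M. ball_iso (E \<omega>) (D \<omega>) (\<phi> \<omega>) E' D' v' r})"

end

theory Submission
  imports Defs
begin


lemma walkers_finite:
  assumes "\<And>j. finite {i. E i j}"
  shows "finite (walkers E v s)"
proof (induction s)
  case 0 then show ?case by simp
next
  case (Suc s)
  have "walkers E v (Suc s) = (\<Union>k\<in>walkers E v s. {j. E j k})" by auto
  then show ?case using Suc assms by simp
qed

lemma pw_zero: "j \<notin> walkers E v s \<Longrightarrow> pw E D v s j = 0"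
proof (induction s arbitrary: j)
  case 0 then show ?case by simp
next
  case (Suc s)
  then have e: "{k\<in>walkers E v s. E j k} = {}" by auto
  show ?case unfolding pw.simps e by simp
qed

lemma pw_nonneg: "pw E D v s j \<ge> 0"
  by (induction s arbitrary: j) (auto intro!: sum_nonneg divide_nonneg_nonneg)

lemma fin_sum_meas:
  fixes f :: "nat \<Rightarrow> 'a \<Rightarrow> real"
  assumes fin: "\<And>\<omega>. \<omega> \<in> space M \<Longrightarrow> finite (S \<omega>)"
    and zero: "\<And>\<omega> k. \<omega> \<in> space M \<Longrightarrow> k \<notin> S \<omega> \<Longrightarrow> f k \<omega> = 0"
    and meas: "\<And>k. f k \<in> borel_measurable M"
  shows "(\<lambda>\<omega>. \<Sum>k\<in>S \<omega>. f k \<omega>) \<in> borel_measurable M"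
proof (rule borel_measurable_LIMSEQ_real[where u="\<lambda>n \<omega>. \<Sum>k<n. f k \<omega>"])
  fix \<omega> assume w: "\<omega> \<in> space M"
  obtain N where N: "S \<omega> \<subseteq> {..<N}"
    using fin[OF w] finite_nat_bounded by blast
  have "\<forall>n\<ge>N. (\<Sum>k<n. f k \<omega>) = (\<Sum>k\<in>S \<omega>. f k \<omega>)"
  proof (intro allI impI)
    fix n assume "n \<ge> N"
    then have "S \<omega> \<subseteq> {..<n}" using N by auto
    then show "(\<Sum>k<n. f k \<omega>) = (\<Sum>k\<in>S \<omega>. f k \<omega>)"
      by (intro sum.mono_neutral_right) (auto simp: zero[OF w])
  qed
  then show "(\<lambda>n. \<Sum>k<n. f k \<omega>) \<longlonglongrightarrow> (\<Sum>k\<in>S \<omega>. f k \<omega>)"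
    by (intro tendsto_eventually) (auto simp: eventually_sequentially)
next
  fix n show "(\<lambda>\<omega>. \<Sum>k<n. f k \<omega>) \<in> borel_measurable M" using meas by measurable
qed

lemma pointwise_bound:
  fixes E :: "nat \<Rightarrow> nat \<Rightarrow> bool" and D :: "nat \<Rightarrow> nat" and c \<alpha> \<epsilon> k :: real
  assumes fin: "finite {i. E i v}" and Dpos: "\<And>j. D j \<ge> 1"
    and c: "0 < c" "c < 1" and \<alpha>: "\<alpha> > 0" and \<epsilon>: "\<epsilon> > 0" and k: "k > 0"
    and d: "real (indeg E v) > \<alpha> * k / (\<epsilon> * c * (1 - c))"
    and g: "\<not> (real (indeg_ge E D \<alpha> v) \<ge> (1 - \<epsilon>) * real (indeg E v))"
  shows "ennreal k < root_pagerank c E D v"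
proof -
  define In where "In = {i. E i v}"
  define Lo where "Lo = {i. E i v \<and> real (D i) < \<alpha>}"
  define Hi where "Hi = {i. E i v \<and> real (D i) \<ge> \<alpha>}"
  have finL: "finite Lo" "finite Hi" using fin unfolding Lo_def Hi_def
    by (auto intro: rev_finite_subset)
  have "In = Lo \<union> Hi" "Lo \<inter> Hi = {}" unfolding In_def Lo_def Hi_def by auto
  then have cardI: "card In = card Lo + card Hi" using finL card_Un_disjoint by metis
  have dI: "indeg E v = card In" "indeg_ge E D \<alpha> v = card Hi"
    unfolding indeg_def indeg_ge_def In_def Hi_def by auto
  have cLo: "real (card Lo) > \<epsilon> * real (indeg E v)"
    using g cardI dI by (simp add: algebra_simps)
  have K: "\<epsilon> * real (indeg E v) > \<alpha> * k / (c * (1 - c))"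
  proof -
    have "\<epsilon> * real (indeg E v) > \<epsilon> * (\<alpha> * k / (\<epsilon> * c * (1 - c)))"
      using mult_strict_left_mono[OF d \<epsilon>] .
    also have "\<epsilon> * (\<alpha> * k / (\<epsilon> * c * (1 - c))) = \<alpha> * k / (c * (1 - c))"
      using \<epsilon> c by (simp add: field_simps)
    finally show ?thesis .
  qed
  define W1 where "W1 = (\<Sum>j\<in>walkers E v 1. pw E D v 1 j)"
  have w1: "walkers E v 1 = In" unfolding In_def by simp
  have pw1: "pw E D v 1 j = 1 / real (D j)" if "j \<in> In" for j
  proof -
    have "{k \<in> walkers E v 0. E j k} = {v}" using that unfolding In_def by auto
    then show ?thesis by simp
  qed
  have W1eq: "W1 = (\<Sum>j\<in>In. 1 / real (D j))" unfolding W1_def w1 by (rule sum.cong[OF refl], rule pw1)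
  have "(\<Sum>j\<in>Lo. 1 / \<alpha>) \<le> (\<Sum>j\<in>Lo. 1 / real (D j))"
  proof (rule sum_mono)
    fix j assume "j \<in> Lo"
    then have "real (D j) < \<alpha>" unfolding Lo_def by auto
    moreover have "real (D j) \<ge> 1" using Dpos[of j] by simp
    ultimately show "1 / \<alpha> \<le> 1 / real (D j)" by (simp add: frac_le)
  qed
  also have "\<dots> \<le> (\<Sum>j\<in>In. 1 / real (D j))"
    using \<open>In = Lo \<union> Hi\<close> finL by (intro sum_mono2) auto
  finally have "real (card Lo) / \<alpha> \<le> W1" using W1eq by simp
  then have "W1 * \<alpha> \<ge> real (card Lo)" using \<alpha> by (simp add: field_simps)
  then have "W1 * \<alpha> > \<alpha> * k / (c * (1 - c))" using cLo K by linarith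
  then have "\<alpha> * (k / (c * (1 - c))) < \<alpha> * W1" by (simp only: times_divide_eq_right mult.commute)
  then have "W1 > k / (c * (1 - c))" using mult_less_cancel_left_pos[OF \<alpha>] by blast
  then have kk: "(1 - c) * c * W1 > k" using c by (simp add: field_simps)
  have W1nn: "W1 \<ge> 0" unfolding W1_def by (intro sum_nonneg pw_nonneg)
  let ?f = "\<lambda>s. ennreal (c ^ s * (\<Sum>j\<in>walkers E v s. pw E D v s j))"
  have "?f 1 \<le> (\<Sum>s. ?f s)"
    using sum_le_suminf[OF summableI, of "{1}" ?f] by simp
  then have "ennreal (1 - c) * ?f 1 \<le> root_pagerank c E D v"
    unfolding root_pagerank_def by (intro mult_left_mono) auto
  moreover have "ennreal (1 - c) * ?f 1 = ennreal ((1 - c) * c * W1)"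
    using c W1nn unfolding W1_def by (simp add: ennreal_mult[symmetric] mult.assoc)
  moreover have "ennreal k < ennreal ((1 - c) * c * W1)"
    using kk k by (simp add: ennreal_less_iff)
  ultimately show ?thesis by simp
qed

theorem mainTheorem14:
  fixes M :: "'w measure"
    and E :: "'w \<Rightarrow> nat \<Rightarrow> nat \<Rightarrow> bool" and D :: "'w \<Rightarrow> nat \<Rightarrow> nat" and \<phi> :: "'w \<Rightarrow> nat"
    and N :: "nat \<Rightarrow> nat" and A :: "nat \<Rightarrow> nat \<Rightarrow> nat \<Rightarrow> bool"
    and c \<alpha> \<epsilon> :: real
  assumes "prob_space M"
    and meas_E: "\<And>i j. {\<omega>\<in>space M. E \<omega> i j} \<in> sets M"
    and meas_D: "\<And>j m. {\<omega>\<in>space M. D \<omega> j = m} \<in> sets M"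
    and meas_phi: "\<And>i. {\<omega>\<in>space M. \<phi> \<omega> = i} \<in> sets M"
    and locfin: "\<And>\<omega> j. \<omega> \<in> space M \<Longrightarrow> finite {i. E \<omega> i j}"
    and outdeg_pos: "\<And>\<omega> j. \<omega> \<in> space M \<Longrightarrow> D \<omega> j \<ge> 1"
    and lwl: "local_weak_limit M E D \<phi> N A"
    and c: "0 < c" "c < 1"
    and \<alpha>: "\<alpha> > 0" and \<epsilon>: "\<epsilon> > 0"
    and hyp: "(\<lambda>k::real. measure M {\<omega>\<in>space M. real (indeg (E \<omega>) (\<phi> \<omega>)) > k \<and>
                 real (indeg_ge (E \<omega>) (D \<omega>) \<alpha> (\<phi> \<omega>)) \<ge> (1 - \<epsilon>) * real (indeg (E \<omega>) (\<phi> \<omega>))})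
              \<in> o(\<lambda>k::real. measure M {\<omega>\<in>space M. real (indeg (E \<omega>) (\<phi> \<omega>)) > k})"
  shows "\<exists>h :: real \<Rightarrow> real. (h \<longlongrightarrow> 0) at_top \<and>
           (\<forall>\<^sub>F k in at_top.
              measure M {\<omega>\<in>space M. root_pagerank c (E \<omega>) (D \<omega>) (\<phi> \<omega>) > ennreal k}
              \<ge> (1 + h k) * measure M {\<omega>\<in>space M.
                     real (indeg (E \<omega>) (\<phi> \<omega>)) > \<alpha> * k / (\<epsilon> * c * (1 - c))})"
proof -
  have Em[measurable]: "(\<lambda>\<omega>. E \<omega> i j) \<in> measurable M (count_space (UNIV::bool set))" for i j
    using meas_E[of i j] by (simp add: Measurable.pred_def)
  interpret prob_space M by fact
  have Dm[measurable]: "(\<lambda>\<omega>. D \<omega> j) \<in> measurable M (count_space UNIV)" for j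
    unfolding measurable_count_space_eq2_countable
    using meas_D[of j] by (auto simp: vimage_def Int_def conj_commute)
  have phim[measurable]: "\<phi> \<in> measurable M (count_space UNIV)"
    unfolding measurable_count_space_eq2_countable
    using meas_phi by (auto simp: vimage_def Int_def conj_commute)
  have wfin: "\<And>\<omega> v s. \<omega> \<in> space M \<Longrightarrow> finite (walkers (E \<omega>) v s)"
    using walkers_finite locfin by blast
  have pwm[measurable]: "(\<lambda>\<omega>. pw (E \<omega>) (D \<omega>) v s j) \<in> borel_measurable M" for v s j
  proof (induction s arbitrary: j)
    case 0 then show ?case by simp
  next
    case (Suc s)
    have "(\<lambda>\<omega>. \<Sum>k\<in>{k\<in>walkers (E \<omega>) v s. E \<omega> j k}.
              (if E \<omega> j k then pw (E \<omega>) (D \<omega>) v s k else 0)) \<in> borel_measurable M"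
    proof (rule fin_sum_meas)
      fix \<omega> assume "\<omega> \<in> space M"
      then show "finite {k\<in>walkers (E \<omega>) v s. E \<omega> j k}" using wfin by simp
    next
      fix \<omega> k assume "k \<notin> {k\<in>walkers (E \<omega>) v s. E \<omega> j k}"
      then show "(if E \<omega> j k then pw (E \<omega>) (D \<omega>) v s k else 0) = 0"
        using pw_zero by auto
    next
      fix k show "(\<lambda>\<omega>. if E \<omega> j k then pw (E \<omega>) (D \<omega>) v s k else 0) \<in> borel_measurable M"
        using Suc by measurable
    qed
    moreover have "\<And>\<omega>. (\<Sum>k\<in>{k\<in>walkers (E \<omega>) v s. E \<omega> j k}.
              (if E \<omega> j k then pw (E \<omega>) (D \<omega>) v s k else 0)) =
              (\<Sum>k\<in>{k\<in>walkers (E \<omega>) v s. E \<omega> j k}. pw (E \<omega>) (D \<omega>) v s k)"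
      by (intro sum.cong) auto
    ultimately have "(\<lambda>\<omega>. \<Sum>k\<in>{k\<in>walkers (E \<omega>) v s. E \<omega> j k}. pw (E \<omega>) (D \<omega>) v s k)
        \<in> borel_measurable M" by simp
    then show ?case by simp measurable
  qed
  have Wm[measurable]: "(\<lambda>\<omega>. \<Sum>j\<in>walkers (E \<omega>) v s. pw (E \<omega>) (D \<omega>) v s j) \<in> borel_measurable M"
    for v s
    by (rule fin_sum_meas) (auto simp: wfin pw_zero)
  have rpv: "(\<lambda>\<omega>. root_pagerank c (E \<omega>) (D \<omega>) v) \<in> borel_measurable M" for v
    unfolding root_pagerank_def by measurable
  have rpm[measurable]: "(\<lambda>\<omega>. root_pagerank c (E \<omega>) (D \<omega>) (\<phi> \<omega>)) \<in> borel_measurable M"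
    by (rule measurable_compose_countable[OF rpv phim])
  have indv: "(\<lambda>\<omega>. real (indeg (E \<omega>) v)) \<in> borel_measurable M" for v
  proof -
    have "(\<lambda>\<omega>. \<Sum>i\<in>{i. E \<omega> i v}. (if E \<omega> i v then 1 else 0 :: real)) \<in> borel_measurable M"
      by (rule fin_sum_meas) (auto simp: locfin)
    then show ?thesis unfolding indeg_def by simp
  qed
  have indm[measurable]: "(\<lambda>\<omega>. real (indeg (E \<omega>) (\<phi> \<omega>))) \<in> borel_measurable M"
    by (rule measurable_compose_countable[OF indv phim])
  have igv: "(\<lambda>\<omega>. real (indeg_ge (E \<omega>) (D \<omega>) \<alpha> v)) \<in> borel_measurable M" for v
  proof -
    have "(\<lambda>\<omega>. \<Sum>i\<in>{i. E \<omega> i v \<and> \<alpha> \<le> real (D \<omega> i)}.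
            (if E \<omega> i v \<and> \<alpha> \<le> real (D \<omega> i) then 1 else 0 :: real)) \<in> borel_measurable M"
      by (rule fin_sum_meas) (auto intro: rev_finite_subset[OF locfin] simp: )
    then show ?thesis unfolding indeg_ge_def by simp
  qed
  have igm[measurable]: "(\<lambda>\<omega>. real (indeg_ge (E \<omega>) (D \<omega>) \<alpha> (\<phi> \<omega>))) \<in> borel_measurable M"
    by (rule measurable_compose_countable[OF igv phim])
  define PA where "PA = (\<lambda>k::real. measure M {\<omega>\<in>space M. real (indeg (E \<omega>) (\<phi> \<omega>)) > k})"
  define PB where "PB = (\<lambda>k::real. measure M {\<omega>\<in>space M. real (indeg (E \<omega>) (\<phi> \<omega>)) > k \<and>
                 real (indeg_ge (E \<omega>) (D \<omega>) \<alpha> (\<phi> \<omega>)) \<ge> (1 - \<epsilon>) * real (indeg (E \<omega>) (\<phi> \<omega>))})"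
  define K where "K = (\<lambda>k::real. \<alpha> * k / (\<epsilon> * c * (1 - c)))"
  define h where "h = (\<lambda>k. - (PB (K k) / PA (K k)))"
  have q: "((\<lambda>k. PB k / PA k) \<longlongrightarrow> 0) at_top"
    using smalloD_tendsto[OF hyp] unfolding PA_def PB_def .
  have pos: "0 < \<alpha> / (\<epsilon> * c * (1 - c))" using \<alpha> \<epsilon> c by simp
  have Klim: "filterlim K at_top at_top"
  proof -
    have "filterlim (\<lambda>k. \<alpha> / (\<epsilon> * c * (1 - c)) * k) at_top at_top"
      by (rule filterlim_tendsto_pos_mult_at_top[OF tendsto_const pos filterlim_ident])
    then show ?thesis unfolding K_def by simp
  qed
  have "((\<lambda>k. PB (K k) / PA (K k)) \<longlongrightarrow> 0) at_top"
    using filterlim_compose[OF q Klim] by simp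
  then have hlim: "(h \<longlongrightarrow> 0) at_top" unfolding h_def using tendsto_minus by fastforce
  have ev: "\<forall>\<^sub>F k in at_top.
              measure M {\<omega>\<in>space M. root_pagerank c (E \<omega>) (D \<omega>) (\<phi> \<omega>) > ennreal k}
              \<ge> (1 + h k) * measure M {\<omega>\<in>space M.
                     real (indeg (E \<omega>) (\<phi> \<omega>)) > \<alpha> * k / (\<epsilon> * c * (1 - c))}"
  proof (rule eventually_mono[OF eventually_gt_at_top[of 0]])
    fix k :: real assume k: "k > 0"
    define SA where "SA = {\<omega>\<in>space M. real (indeg (E \<omega>) (\<phi> \<omega>)) > K k}"
    define SB where "SB = {\<omega>\<in>space M. real (indeg (E \<omega>) (\<phi> \<omega>)) > K k \<and>
                 real (indeg_ge (E \<omega>) (D \<omega>) \<alpha> (\<phi> \<omega>)) \<ge> (1 - \<epsilon>) * real (indeg (E \<omega>) (\<phi> \<omega>))}"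
    define SR where "SR = {\<omega>\<in>space M. root_pagerank c (E \<omega>) (D \<omega>) (\<phi> \<omega>) > ennreal k}"
    have sets: "SA \<in> sets M" "SB \<in> sets M" "SR \<in> sets M"
      unfolding SA_def SB_def SR_def by measurable
    have sub: "SA - SB \<subseteq> SR"
    proof
      fix \<omega> assume w: "\<omega> \<in> SA - SB"
      then have ws: "\<omega> \<in> space M" unfolding SA_def by auto
      show "\<omega> \<in> SR" unfolding SR_def
        using w ws pointwise_bound[OF locfin[OF ws] outdeg_pos[OF ws] c \<alpha> \<epsilon> k]
        unfolding SA_def SB_def K_def by auto
    qed
    have "measure M (SA - SB) = measure M SA - measure M SB"
      using sets by (intro finite_measure_Diff) (auto simp: SA_def SB_def)
    moreover have "measure M (SA - SB) \<le> measure M SR"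
      using sets sub by (intro finite_measure_mono) auto
    moreover have "PA (K k) = measure M SA" "PB (K k) = measure M SB"
      unfolding PA_def PB_def SA_def SB_def by auto
    ultimately have main: "PA (K k) - PB (K k) \<le> measure M SR" by simp
    have "(1 + h k) * PA (K k) \<le> measure M SR"
    proof (cases "PA (K k) = 0")
      case True then show ?thesis by simp
    next
      case False
      then have "(1 + h k) * PA (K k) = PA (K k) - PB (K k)"
        unfolding h_def by (simp add: field_simps)
      then show ?thesis using main by simp
    qed
    then show "measure M {\<omega>\<in>space M. root_pagerank c (E \<omega>) (D \<omega>) (\<phi> \<omega>) > ennreal k}
              \<ge> (1 + h k) * measure M {\<omega>\<in>space M.
                     real (indeg (E \<omega>) (\<phi> \<omega>)) > \<alpha> * k / (\<epsilon> * c * (1 - c))}"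
      unfolding SR_def PA_def K_def by simp
  qed
  show ?thesis using hlim ev by blast
qed

end
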